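(* Let $n\ge 2$, let $\Omega$ be a compact subset of $\mathbb{R}^n$, let $v\in S^{n-1}$ and $b\in\mathbb{R}$. Then $b\ge l_{\Omega}(v)$ if and only if for every $x\in \Omega^+_{v,b}$ the closed line segment $\overline{xx'}$ joining $x$ and $x'=\mathrm{R}_{v,b}(x)$ is contained in $\Omega$.
   Context: $S^{n-1}$ is the unit sphere in $\mathbb{R}^n$. For $X\subset\mathbb{R}^n$, $v\in S^{n-1}$ and $b\in\mathbb{R}$, put $X^+_{v,b}=X\cap\{x\in\mathbb{R}^n : x\cdot v>b\}$, and let $\mathrm{R}_{v,b}$ be the reflection of $\mathbb{R}^n$ in the hyperplane $\{x : x\cdot v=b\}$. For a bounded $X\subset\mathbb{R}^n$, the level of the maximal cap in direction $v$ is $l_X(v)=\inf\{a : \mathrm{R}_{v,c}(X^+_{v,c})\subset X \text{ for every } c\ge a\}$. For $x,y\in\mathbb{R}^n$, $\overline{xy}$ denotes the closed line segment joining $x$ and $y$. *)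

theory Defs
  imports "HOL-Analysis.Analysis" "HOL-Library.Extended_Real"
begin

definition cap_plus :: "(real^'n) set \<Rightarrow> real^'n \<Rightarrow> real \<Rightarrow> (real^'n) set" where
  "cap_plus X v b = X \<inter> {x. x \<bullet> v > b}"

definition refl_hyp :: "real^'n \<Rightarrow> real \<Rightarrow> real^'n \<Rightarrow> real^'n" where
  "refl_hyp v b x = x - (2 * (x \<bullet> v - b)) *\<^sub>R v"

text \<open>Level of the maximal cap, as an extended real (the infimum of the empty-constraint
  case, e.g. X empty, is -\<infinity>).\<close>
definition max_cap_level :: "(real^'n) set \<Rightarrow> real^'n \<Rightarrow> ereal" where
  "max_cap_level X v =
     Inf (ereal ` {a. \<forall>c\<ge>a. refl_hyp v c ` cap_plus X v c \<subseteq> X})"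

end

theory Submission
  imports Defs
begin

theorem lemma2p1:
  fixes \<Omega> :: "(real^'n) set" and v :: "real^'n" and b :: real
  assumes "CARD('n) \<ge> 2"
    and "compact \<Omega>"
    and "v \<in> sphere 0 1"
  shows "ereal b \<ge> max_cap_level \<Omega> v \<longleftrightarrow>
         (\<forall>x \<in> cap_plus \<Omega> v b. closed_segment x (refl_hyp v b x) \<subseteq> \<Omega>)"
proof
  define S where "S = {a. \<forall>c\<ge>a. refl_hyp v c ` cap_plus \<Omega> v c \<subseteq> \<Omega>}"
  have v0: "v \<noteq> 0" using assms(3) by auto
  have cl: "closed \<Omega>" using assms(2) compact_imp_closed by blast
  assume H: "ereal b \<ge> max_cap_level \<Omega> v"
  show "\<forall>x \<in> cap_plus \<Omega> v b. closed_segment x (refl_hyp v b x) \<subseteq> \<Omega>"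
  proof
    fix x assume x: "x \<in> cap_plus \<Omega> v b"
    hence xO: "x \<in> \<Omega>" and xv: "x \<bullet> v > b" by (auto simp: cap_plus_def)
    have ne: "x \<noteq> refl_hyp v b x"
      using xv v0 by (auto simp: refl_hyp_def)
    have "open_segment x (refl_hyp v b x) \<subseteq> \<Omega>"
    proof
      fix z assume "z \<in> open_segment x (refl_hyp v b x)"
      then obtain u where u: "0 < u" "u < 1" "z = (1-u) *\<^sub>R x + u *\<^sub>R refl_hyp v b x"
        unfolding in_segment(2) by blast
      define c where "c = x \<bullet> v - u * (x \<bullet> v - b)"
      have cb: "c > b"
      proof -
        have "u * (x \<bullet> v - b) < 1 * (x \<bullet> v - b)"
          using u xv by (intro mult_strict_right_mono) auto
        thus ?thesis by (simp add: c_def)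
      qed
      have cx: "x \<bullet> v > c" using u xv by (simp add: c_def)
      have e1: "(1-u) *\<^sub>R x + u *\<^sub>R refl_hyp v b x = x - (2 * (u * (x \<bullet> v - b))) *\<^sub>R v"
        by (simp add: refl_hyp_def algebra_simps)
      have e2: "x \<bullet> v - c = u * (x \<bullet> v - b)" by (simp add: c_def)
      have zR: "z = refl_hyp v c x"
        using u(3) e1 e2 by (simp add: refl_hyp_def)
      have "Inf (ereal ` S) < ereal c" using H cb unfolding max_cap_level_def S_def
        by (simp add: order_le_less_trans)
      then obtain a where "a \<in> S" "ereal a < ereal c" by (auto simp: Inf_less_iff)
      hence "refl_hyp v c ` cap_plus \<Omega> v c \<subseteq> \<Omega>" by (auto simp: S_def)
      moreover have "x \<in> cap_plus \<Omega> v c" using xO cx by (simp add: cap_plus_def)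
      ultimately show "z \<in> \<Omega>" using zR by blast
    qed
    hence "closure (open_segment x (refl_hyp v b x)) \<subseteq> \<Omega>"
      using cl closure_minimal by blast
    thus "closed_segment x (refl_hyp v b x) \<subseteq> \<Omega>"
      using ne by (simp add: closure_open_segment)
  qed
next
  define S where "S = {a. \<forall>c\<ge>a. refl_hyp v c ` cap_plus \<Omega> v c \<subseteq> \<Omega>}"
  assume H: "\<forall>x \<in> cap_plus \<Omega> v b. closed_segment x (refl_hyp v b x) \<subseteq> \<Omega>"
  have "b \<in> S" unfolding S_def
  proof (intro CollectI allI impI subsetI)
    fix c z assume cb: "b \<le> c" and z: "z \<in> refl_hyp v c ` cap_plus \<Omega> v c"
    then obtain x where x: "x \<in> cap_plus \<Omega> v c" "z = refl_hyp v c x" by auto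
    hence xv: "x \<bullet> v > c" by (auto simp: cap_plus_def)
    have xb: "x \<in> cap_plus \<Omega> v b" using x cb by (auto simp: cap_plus_def)
    define u where "u = (x \<bullet> v - c) / (x \<bullet> v - b)"
    have u: "0 \<le> u" "u \<le> 1" using xv cb by (auto simp: u_def divide_simps)
    have e1: "(1-u) *\<^sub>R x + u *\<^sub>R refl_hyp v b x = x - (2 * (u * (x \<bullet> v - b))) *\<^sub>R v"
      by (simp add: refl_hyp_def algebra_simps)
    have e2: "u * (x \<bullet> v - b) = x \<bullet> v - c" using xv cb by (simp add: u_def)
    have "z = (1-u) *\<^sub>R x + u *\<^sub>R refl_hyp v b x"
      using x(2) e1 e2 by (simp add: refl_hyp_def)
    hence "z \<in> closed_segment x (refl_hyp v b x)" using u unfolding in_segment(1) by blast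
    thus "z \<in> \<Omega>" using H xb by blast
  qed
  thus "ereal b \<ge> max_cap_level \<Omega> v" unfolding max_cap_level_def S_def[symmetric]
    by (simp add: Inf_lower)
qed

end
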